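(* Let $k\in\mathbb{Z}$ and let $p,s$ be positive integers with $s<p$. Then $$\sum_{\nu=0}^{p}\binom{p-\nu+1}{s}\binom{p}{\nu}E_{\nu}^{(k)}=\binom{p}{s}E_{p-s}^{(k)}(1)+\binom{p}{s-1}E_{p-s+1}^{(k)}(1).$$
   Context: For $k\in\mathbb{Z}$, $\mathrm{Ei}_k(x)=\sum_{n=1}^{\infty}\frac{x^n}{n^k(n-1)!}$; the poly-Genocchi polynomials $G_n^{(k)}(x)$ are defined by $\frac{2\,\mathrm{Ei}_k(\log(1+t))}{e^t+1}e^{xt}=\sum_{n=0}^{\infty}G_n^{(k)}(x)\frac{t^n}{n!}$; the poly-Euler polynomials are $E_n^{(k)}(x)=\frac{G_{n+1}^{(k)}(x)}{n+1}$ ($n\ge0$), and $E_n^{(k)}=E_n^{(k)}(0)$. *)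

theory Defs
  imports "HOL-Computational_Algebra.Formal_Power_Series"
begin

definition Ei_fps :: "int \<Rightarrow> real fps" where
  "Ei_fps k = Abs_fps (\<lambda>n. if n = 0 then 0 else 1 / ((real n) powi k * fact (n - 1)))"

text \<open>Generating function 2 Ei_k(log(1+t)) / (e^t + 1) * e^(x t); fps_ln 1 is log(1+t).\<close>
definition polyGenocchi_gf :: "int \<Rightarrow> real \<Rightarrow> real fps" where
  "polyGenocchi_gf k x =
     fps_const 2 * (Ei_fps k oo fps_ln 1) * inverse (fps_exp 1 + 1) * fps_exp x"

definition polyGenocchi :: "int \<Rightarrow> nat \<Rightarrow> real \<Rightarrow> real" where
  "polyGenocchi k n x = fact n * fps_nth (polyGenocchi_gf k x) n"

definition polyEuler :: "int \<Rightarrow> nat \<Rightarrow> real \<Rightarrow> real" where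
  "polyEuler k n x = polyGenocchi k (n + 1) x / real (n + 1)"

end

theory Submission
  imports Defs
begin

lemma gf_shift: "polyGenocchi_gf k x = polyGenocchi_gf k 0 * fps_exp x"
proof -
  have "fps_exp (0::real) = 1" by (rule fps_ext) (simp add: power_0_left)
  then show ?thesis unfolding polyGenocchi_gf_def by (simp add: mult.assoc)
qed

lemma G0: "polyGenocchi k 0 x = 0"
  unfolding polyGenocchi_def polyGenocchi_gf_def by (simp add: Ei_fps_def)

lemma G_appell: "polyGenocchi k n 1 = (\<Sum>i=0..n. real (n choose i) * polyGenocchi k i 0)"
proof -
  have "polyGenocchi k n 1 = fact n * (\<Sum>i=0..n. fps_nth (polyGenocchi_gf k 0) i * (1 / fact (n - i)))"
    unfolding polyGenocchi_def by (subst gf_shift) (simp add: fps_mult_nth)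
  also have "\<dots> = (\<Sum>i=0..n. real (n choose i) * polyGenocchi k i 0)"
    unfolding sum_distrib_left
  proof (rule sum.cong[OF refl])
    fix i assume "i \<in> {0..n}"
    then have "i \<le> n" by simp
    then show "fact n * (fps_nth (polyGenocchi_gf k 0) i * (1 / fact (n - i))) = real (n choose i) * polyGenocchi k i 0"
      unfolding polyGenocchi_def by (simp add: binomial_fact field_simps)
  qed
  finally show ?thesis .
qed

lemma E_appell: "polyEuler k n 1 = (\<Sum>j\<le>n. real (n choose j) * polyEuler k j 0)"
proof -
  have "polyGenocchi k (Suc n) 1 = (\<Sum>i=0..Suc n. real (Suc n choose i) * polyGenocchi k i 0)"
    by (rule G_appell)
  also have "\<dots> = (\<Sum>j\<le>n. real (Suc n choose Suc j) * polyGenocchi k (Suc j) 0)"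
    unfolding atLeast0AtMost by (subst sum.atMost_Suc_shift) (simp add: G0)
  also have "\<dots> = (\<Sum>j\<le>n. real (Suc n) * (real (n choose j) * polyEuler k j 0))"
  proof (rule sum.cong[OF refl])
    fix j
    have e: "real (Suc j) * real (Suc n choose Suc j) = real (Suc n) * real (n choose j)"
      using Suc_times_binomial[of j n] by (metis of_nat_mult)
    show "real (Suc n choose Suc j) * polyGenocchi k (Suc j) 0 = real (Suc n) * (real (n choose j) * polyEuler k j 0)"
    proof -
      define G where "G = polyGenocchi k (Suc j) 0"
      have "real (Suc n) * (real (n choose j) * polyEuler k j 0)
          = (real (Suc n) * real (n choose j)) * G / real (Suc j)"
        unfolding polyEuler_def G_def by simp
      also have "\<dots> = (real (Suc j) * real (Suc n choose Suc j)) * G / real (Suc j)"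
        by (simp only: e)
      also have "\<dots> = real (Suc n choose Suc j) * G"
        by (simp del: of_nat_Suc)
      finally show ?thesis unfolding G_def by simp
    qed
  qed
  finally have "polyGenocchi k (Suc n) 1 = real (Suc n) * (\<Sum>j\<le>n. real (n choose j) * polyEuler k j 0)"
    by (simp add: sum_distrib_left)
  then show ?thesis unfolding polyEuler_def by simp
qed

lemma swap_choose: "(p choose a) * ((p - a) choose b) = (p choose b) * ((p - b) choose (a::nat))"
proof (cases "a + b \<le> p")
  case True
  have 1: "(p choose (a+b)) * ((a+b) choose a) = (p choose a) * ((p - a) choose b)"
    using choose_mult[of a "a+b" p] True by simp
  have 2: "(p choose (a+b)) * ((a+b) choose b) = (p choose b) * ((p - b) choose a)"
    using choose_mult[of b "a+b" p] True by simp
  have "(a+b) choose a = (a+b) choose b" by (metis binomial_symmetric le_add1 add_diff_cancel_left')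
  then show ?thesis using 1 2 by simp
next
  case False
  consider "p < a" | "p < b" | "a \<le> p" "b \<le> p" by linarith
  then show ?thesis
  proof cases
    case 3
    then have "p - a < b" "p - b < a" using False by linarith+
    then show ?thesis by (simp add: binomial_eq_0)
  qed (simp_all add: binomial_eq_0)
qed

lemma coef_id:
  assumes "0 < s" "s < p"
  shows "real (p choose s) * real ((p - s) choose j) + real (p choose (s - 1)) * real ((p - s + 1) choose j)
       = real ((p - j + 1) choose s) * real (p choose j)"
proof -
  obtain t where t: "s = Suc t" using assms by (cases s) auto
  have ps: "p - s + 1 = p - t" using assms t by simp
  have s1: "s - 1 = t" using t by simp
  have "(p choose s) * ((p - s) choose j) + (p choose t) * ((p - t) choose j)
      = (p choose j) * ((p - j) choose s) + (p choose j) * ((p - j) choose t)"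
    using swap_choose[of p s j] swap_choose[of p t j] by simp
  also have "\<dots> = (p choose j) * (Suc (p - j) choose s)"
    unfolding t binomial_Suc_Suc by (simp only: add_mult_distrib2 add.commute)
  also have "\<dots> = ((p - j + 1) choose s) * (p choose j)" by simp
  finally have nat_eq: "(p choose s) * ((p - s) choose j) + (p choose t) * ((p - t) choose j) = ((p - j + 1) choose s) * (p choose j)" .
  show ?thesis unfolding ps s1
    using nat_eq by (simp only: of_nat_mult[symmetric] of_nat_add[symmetric] of_nat_eq_iff)
qed

theorem lemma8:
  fixes k :: int and p s :: nat
  assumes "0 < p" and "0 < s" and "s < p"
  shows "(\<Sum>\<nu>=0..p. real ((p - \<nu> + 1) choose s) * real (p choose \<nu>) * polyEuler k \<nu> 0)
       = real (p choose s) * polyEuler k (p - s) 1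
         + real (p choose (s - 1)) * polyEuler k (p - s + 1) 1"
proof -
  have ext: "(\<Sum>j\<le>n. real (n choose j) * polyEuler k j 0) = (\<Sum>j\<le>p. real (n choose j) * polyEuler k j 0)"
    if "n \<le> p" for n
    by (rule sum.mono_neutral_left) (use that in auto)
  have "real (p choose s) * polyEuler k (p - s) 1 + real (p choose (s - 1)) * polyEuler k (p - s + 1) 1
     = (\<Sum>j\<le>p. (real (p choose s) * real ((p - s) choose j) + real (p choose (s - 1)) * real ((p - s + 1) choose j)) * polyEuler k j 0)"
  proof -
    have a: "p - s \<le> p" and b: "p - s + 1 \<le> p" using assms by auto
    show ?thesis
      unfolding E_appell ext[OF a] ext[OF b] sum_distrib_left sum.distrib[symmetric]
      by (rule sum.cong[OF refl]) (simp only: distrib_right mult.assoc)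
  qed
  also have "\<dots> = (\<Sum>j\<le>p. real ((p - j + 1) choose s) * real (p choose j) * polyEuler k j 0)"
    using coef_id[OF assms(2,3)] by simp
  finally show ?thesis by (simp add: atLeast0AtMost)
qed

end
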